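(* For positive semidefinite matrices $A,B$ of the same size, $$\operatorname{tr}(A+B)^4-\operatorname{tr}(A^4+B^4)\ge(2^4-2)\operatorname{tr}(A^{1/2}BA^{1/2})^{2}=14\operatorname{tr}(AB)^2.$$ *)

theory Defs
  imports "Jordan_Normal_Form.Schur_Decomposition" "HOL-Library.Complex_Order"
begin

text \<open>Positive semidefinite complex n x n matrices: Hermitian with nonnegative
  quadratic form (the order on complex numbers is that of HOL-Library.Complex_Order,
  i.e. 0 \<le> z iff z is a nonnegative real).\<close>
definition psd_mat :: "nat \<Rightarrow> complex mat \<Rightarrow> bool" where
  "psd_mat n A \<longleftrightarrow> A \<in> carrier_mat n n \<and> mat_adjoint A = A \<and>
     (\<forall>v \<in> carrier_vec n. 0 \<le> conjugate v \<bullet> (A *\<^sub>v v))"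

definition trace :: "'a::comm_monoid_add mat \<Rightarrow> 'a" where
  "trace A = (\<Sum>i<dim_row A. A $$ (i, i))"

definition mat_sqrt :: "complex mat \<Rightarrow> complex mat" where
  "mat_sqrt A = (THE S. psd_mat (dim_row A) S \<and> S * S = A)"

end

theory Submission
  imports Defs
begin

lemma adj_dims[simp]: "dim_row (mat_adjoint A) = dim_col A" "dim_col (mat_adjoint A) = dim_row A"
  unfolding mat_adjoint_def by auto
lemma adj_index[simp]: "i < dim_col A \<Longrightarrow> j < dim_row A \<Longrightarrow> mat_adjoint A $$ (i,j) = conjugate (A $$ (j,i))"
  by (simp add: mat_adjoint_def mat_of_rows_def)
lemma adj_carrier[simp]: "A \<in> carrier_mat n m \<Longrightarrow> mat_adjoint A \<in> carrier_mat m n"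
  by (metis adj_dims carrier_matD carrier_matI)

lemma adj_adj[simp]: "mat_adjoint (mat_adjoint (A::complex mat)) = A"
  by (rule eq_matI) simp_all

lemma adj_mult: fixes A B :: "complex mat"
  assumes "A \<in> carrier_mat n k" "B \<in> carrier_mat k m"
  shows "mat_adjoint (A * B) = mat_adjoint B * mat_adjoint A"
  using assms by (intro eq_matI) (simp_all add: scalar_prod_def sum_conjugate mult.commute)

lemma trace_comm: fixes A B :: "complex mat"
  assumes "A \<in> carrier_mat n m" "B \<in> carrier_mat m n"
  shows "trace (A * B) = trace (B * A)"
  using assms apply (simp add: trace_def scalar_prod_def)
  apply (subst sum.swap) by (simp add: mult.commute atLeast0LessThan)

lemma adj_add: fixes A B :: "complex mat"
  assumes "A \<in> carrier_mat n m" "B \<in> carrier_mat n m"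
  shows "mat_adjoint (A + B) = mat_adjoint A + mat_adjoint B"
  using assms by (intro eq_matI) simp_all

lemma adj_minus: fixes A B :: "complex mat"
  assumes "A \<in> carrier_mat n m" "B \<in> carrier_mat n m"
  shows "mat_adjoint (A - B) = mat_adjoint A - mat_adjoint B"
  using assms by (intro eq_matI) simp_all

lemma adj_one[simp]: "mat_adjoint (1\<^sub>m n :: complex mat) = 1\<^sub>m n"
  by (intro eq_matI) simp_all

lemma trace_add: fixes A B :: "complex mat"
  assumes "A \<in> carrier_mat n n" "B \<in> carrier_mat n n"
  shows "trace (A + B) = trace A + trace B"
  using assms by (simp add: trace_def sum.distrib)

lemma trace_minus: fixes A B :: "complex mat"
  assumes "A \<in> carrier_mat n n" "B \<in> carrier_mat n n"
  shows "trace (A - B) = trace A - trace B"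
  using assms by (simp add: trace_def sum_subtractf)

lemma trace_adj_nonneg: fixes X :: "complex mat"
  shows "0 \<le> trace (X * mat_adjoint X)"
  unfolding trace_def
proof (rule sum_nonneg)
  fix i assume "i \<in> {..<dim_row (X * mat_adjoint X)}"
  hence i: "i < dim_row X" by simp
  have "(X * mat_adjoint X) $$ (i,i) = (\<Sum>k<dim_col X. X $$ (i,k) * cnj (X $$ (i,k)))"
    using i by (simp add: scalar_prod_def atLeast0LessThan)
  also have "\<dots> \<ge> 0"
    by (rule sum_nonneg) (metis conjugate_complex_def conjugate_square_positive)
  finally show "0 \<le> (X * mat_adjoint X) $$ (i,i)" .
qed



lemma pow4: assumes "A \<in> carrier_mat n n" shows "A ^\<^sub>m 4 = A * (A * (A * A))"
proof -
  have 4: "(4::nat) = Suc (Suc (Suc (Suc 0)))" by simp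
  have d: "dim_row A = n" using assms by (rule carrier_matD)
  have AA: "A * A \<in> carrier_mat n n" using assms assms by (rule mult_carrier_mat)
  show ?thesis unfolding 4 pow_mat.simps d left_mult_one_mat[OF assms]
    assoc_mult_mat[OF assms assms assms] assoc_mult_mat[OF assms AA assms] ..
qed

lemma pow2: assumes "A \<in> carrier_mat n n" shows "A ^\<^sub>m 2 = A * A"
proof -
  have 2: "(2::nat) = Suc (Suc 0)" by simp
  have d: "dim_row A = n" using assms by (rule carrier_matD)
  show ?thesis unfolding 2 pow_mat.simps d
    unfolding left_mult_one_mat[OF assms] ..
qed

lemma rot: fixes X Y Z W :: "complex mat"
  assumes "X \<in> carrier_mat n n" "Y \<in> carrier_mat n n" "Z \<in> carrier_mat n n" "W \<in> carrier_mat n n"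
  shows "trace (X * (Y * (Z * W))) = trace (Y * (Z * (W * X)))"
proof -
  have "trace (X * (Y * (Z * W))) = trace ((Y * (Z * W)) * X)"
    using assms by (intro trace_comm[of _ n n] mult_carrier_mat)
  also have "(Y * (Z * W)) * X = Y * (Z * (W * X))"
    using assms by (simp only: assoc_mult_mat[of _ n n _ n _ n] mult_carrier_mat[of _ n n _ n])
  finally show ?thesis .
qed

lemma main_identity:
  fixes A B P Q :: "complex mat"
  assumes cA: "A \<in> carrier_mat n n" and cB: "B \<in> carrier_mat n n"
    and cP: "P \<in> carrier_mat n n" and cQ: "Q \<in> carrier_mat n n"
    and hP: "mat_adjoint P = P" and hQ: "mat_adjoint Q = Q"
    and PP: "P * P = A" and QQ: "Q * Q = B"
  shows "trace ((A + B) ^\<^sub>m 4) - trace (A ^\<^sub>m 4 + B ^\<^sub>m 4) - 14 * trace ((A * B) ^\<^sub>m 2)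
    = 4 * trace ((P * (A - B) * Q) * mat_adjoint (P * (A - B) * Q))
      + 6 * trace ((A * B - B * A) * mat_adjoint (A * B - B * A))"
proof -
  have mc: "\<And>X Y :: complex mat. X \<in> carrier_mat n n \<Longrightarrow> Y \<in> carrier_mat n n \<Longrightarrow> X * Y \<in> carrier_mat n n"
    by (rule mult_carrier_mat)
  have ac: "\<And>X Y :: complex mat. X \<in> carrier_mat n n \<Longrightarrow> Y \<in> carrier_mat n n \<Longrightarrow> X + Y \<in> carrier_mat n n"
    by (rule add_carrier_mat)
  have sc: "\<And>X Y :: complex mat. X \<in> carrier_mat n n \<Longrightarrow> Y \<in> carrier_mat n n \<Longrightarrow> X - Y \<in> carrier_mat n n"
    by (rule minus_carrier_mat)
  have d1: "\<And>X Y Z :: complex mat. X \<in> carrier_mat n n \<Longrightarrow> Y \<in> carrier_mat n n \<Longrightarrow> Z \<in> carrier_mat n n \<Longrightarrow> (X + Y) * Z = X * Z + Y * Z"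
    by (rule add_mult_distrib_mat)
  have d2: "\<And>X Y Z :: complex mat. X \<in> carrier_mat n n \<Longrightarrow> Y \<in> carrier_mat n n \<Longrightarrow> Z \<in> carrier_mat n n \<Longrightarrow> X * (Y + Z) = X * Y + X * Z"
    by (rule mult_add_distrib_mat)
  have d3: "\<And>X Y Z :: complex mat. X \<in> carrier_mat n n \<Longrightarrow> Y \<in> carrier_mat n n \<Longrightarrow> Z \<in> carrier_mat n n \<Longrightarrow> (X - Y) * Z = X * Z - Y * Z"
    by (rule minus_mult_distrib_mat)
  have d4: "\<And>X Y Z :: complex mat. X \<in> carrier_mat n n \<Longrightarrow> Y \<in> carrier_mat n n \<Longrightarrow> Z \<in> carrier_mat n n \<Longrightarrow> X * (Y - Z) = X * Y - X * Z"
    by (rule mult_minus_distrib_mat)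
  have as: "\<And>X Y Z :: complex mat. X \<in> carrier_mat n n \<Longrightarrow> Y \<in> carrier_mat n n \<Longrightarrow> Z \<in> carrier_mat n n \<Longrightarrow> (X * Y) * Z = X * (Y * Z)"
    by (rule assoc_mult_mat)
  have ta: "\<And>X Y :: complex mat. X \<in> carrier_mat n n \<Longrightarrow> Y \<in> carrier_mat n n \<Longrightarrow> trace (X + Y) = trace X + trace Y"
    by (rule trace_add)
  have tm: "\<And>X Y :: complex mat. X \<in> carrier_mat n n \<Longrightarrow> Y \<in> carrier_mat n n \<Longrightarrow> trace (X - Y) = trace X - trace Y"
    by (rule trace_minus)
  have am: "\<And>X Y :: complex mat. X \<in> carrier_mat n n \<Longrightarrow> Y \<in> carrier_mat n n \<Longrightarrow> mat_adjoint (X * Y) = mat_adjoint Y * mat_adjoint X"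
    by (rule adj_mult)
  have amm: "\<And>X Y :: complex mat. X \<in> carrier_mat n n \<Longrightarrow> Y \<in> carrier_mat n n \<Longrightarrow> mat_adjoint (X - Y) = mat_adjoint X - mat_adjoint Y"
    by (rule adj_minus)
  have hA: "mat_adjoint A = A" unfolding PP[symmetric] am[OF cP cP] hP ..
  have hB: "mat_adjoint B = B" unfolding QQ[symmetric] am[OF cQ cQ] hQ ..
  note S = mc ac sc d1 d2 d3 d4 as ta tm cA cB
  define t1 where "t1 = trace (A * (A * (A * B)))"
  define t2 where "t2 = trace (A * (A * (B * B)))"
  define t3 where "t3 = trace (A * (B * (B * B)))"
  define s where "s = trace (A * (B * (A * B)))"
  have r: "\<And>X Y Z W :: complex mat. X \<in> carrier_mat n n \<Longrightarrow> Y \<in> carrier_mat n n \<Longrightarrow> Z \<in> carrier_mat n n \<Longrightarrow> W \<in> carrier_mat n n \<Longrightarrow> trace (X * (Y * (Z * W))) = trace (Y * (Z * (W * X)))"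
    by (rule rot)
  have e3: "trace (A * (A * (B * A))) = t1" unfolding t1_def using r[OF cA cA cA cB] by (rule sym)
  have e2: "trace (A * (B * (A * A))) = t1" using r[OF cA cA cB cA] e3 by metis
  have e1: "trace (B * (A * (A * A))) = t1" using r[OF cA cB cA cA] e2 by metis
  have f1: "trace (B * (B * (B * A))) = t3" unfolding t3_def using r[OF cA cB cB cB] by (rule sym)
  have f2: "trace (B * (B * (A * B))) = t3" using r[OF cB cB cB cA] f1 by metis
  have f3: "trace (B * (A * (B * B))) = t3" using r[OF cB cB cA cB] f2 by metis
  have g3: "trace (A * (B * (B * A))) = t2" unfolding t2_def using r[OF cA cA cB cB] by (rule sym)
  have g2: "trace (B * (B * (A * A))) = t2" using r[OF cA cB cB cA] g3 by metis
  have g1: "trace (B * (A * (A * B))) = t2" using r[OF cB cB cA cA] g2 by metis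
  have h1: "trace (B * (A * (B * A))) = s" unfolding s_def using r[OF cA cB cA cB] by (rule sym)
  have L1: "trace ((A + B) ^\<^sub>m 4) = trace (A * (A * (A * A))) + trace (B * (B * (B * B))) + 4 * t1 + 4 * t2 + 4 * t3 + 2 * s"
    apply (subst pow4[of _ n], rule ac[OF cA cB])
    apply (simp only: S)
    apply (simp only: e1 e2 e3 f1 f2 f3 g1 g2 g3 h1 flip: t1_def t2_def t3_def s_def)
    by simp
  have L2: "trace (A ^\<^sub>m 4 + B ^\<^sub>m 4) = trace (A * (A * (A * A))) + trace (B * (B * (B * B)))"
    by (simp only: pow4[OF cA] pow4[OF cB] S)
  have L3: "trace ((A * B) ^\<^sub>m 2) = s"
    by (simp only: pow2[OF mc[OF cA cB]] S flip: s_def)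
  have R1: "trace ((A * B - B * A) * mat_adjoint (A * B - B * A)) = 2 * t2 - 2 * s"
    apply (simp only: amm am S hA hB)
    apply (simp only: e1 e2 e3 f1 f2 f3 g1 g2 g3 h1 flip: t1_def t2_def t3_def s_def)
    by simp
  have "trace ((P * (A - B) * Q) * mat_adjoint (P * (A - B) * Q)) = trace (P * ((A - B) * (Q * (Q * ((A - B) * P)))))"
    using cP cQ cA cB by (simp only: am amm hP hQ hA hB S)
  also have "\<dots> = trace ((A - B) * (Q * (Q * ((A - B) * (P * P)))))"
    using cP cQ cA cB by (simp only: S trace_comm[of P n n])
  also have "\<dots> = trace (A * ((A - B) * (B * (A - B))))"
  proof -
    have cAB: "A - B \<in> carrier_mat n n" by (rule sc[OF cA cB])
    have q: "Q * (Q * ((A - B) * (P * P))) = B * ((A - B) * A)"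
      unfolding PP as[OF cQ cQ mc[OF cAB cA], symmetric] QQ ..
    show ?thesis unfolding q using r[OF cA cAB cB cAB] by (rule sym)
  qed
  also have "\<dots> = t1 - 2 * t2 + t3"
    apply (simp only: S)
    apply (simp only: e1 e2 e3 f1 f2 f3 g1 g2 g3 h1 flip: t1_def t2_def t3_def s_def)
    by simp
  finally have R2: "trace ((P * (A - B) * Q) * mat_adjoint (P * (A - B) * Q)) = t1 - 2 * t2 + t3" .
  show ?thesis unfolding L1 L2 L3 R1 R2 by (simp add: algebra_simps)
qed



lemma row_adj[simp]: "i < dim_col A \<Longrightarrow> row (mat_adjoint A) i = conjugate (col A i)"
  by (rule eq_vecI) simp_all

lemma cplx_nonneg_real: "0 \<le> (z::complex) \<Longrightarrow> z = complex_of_real (Re z)"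
  by (simp add: less_eq_complex_def complex_eq_iff)

lemma orthonormal_completion:
  fixes v :: "complex vec"
  assumes v: "v \<in> carrier_vec n" and v0: "v \<noteq> 0\<^sub>v n"
  shows "\<exists>U c. U \<in> carrier_mat n n \<and> mat_adjoint U * U = 1\<^sub>m n \<and> col U 0 = c \<cdot>\<^sub>v v"
proof -
  interpret cof_vec_space n "TYPE(complex)" .
  define b where "b = basis_completion v"
  define ws where "ws = gram_schmidt n b"
  note bc = basis_completion[OF v v0, folded b_def]
  have dist_b: "distinct b" and indep: "\<not> lin_dep (set b)" and b: "set b \<subseteq> carrier_vec n"
    and hdb: "hd b = v" and len_b: "length b = n" using bc by blast+
  have n0: "n \<noteq> 0"
  proof
    assume "n = 0"
    hence "v = 0\<^sub>v n" using v by (intro eq_vecI) (simp_all add: carrier_vecD)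
    with v0 show False by contradiction
  qed
  from hdb len_b n0 obtain vs where bv: "b = v # vs" by (cases b) simp_all
  note gr = gram_schmidt_result[OF b dist_b indep refl, folded ws_def]
  have ws: "set ws \<subseteq> carrier_vec n" "corthogonal ws" "length ws = n"
    using gr len_b by simp_all
  from gram_schmidt_hd[OF v, of vs, folded bv] have hdws: "hd ws = v" unfolding ws_def .
  define nr where "nr = (\<lambda>w::complex vec. 1 / complex_of_real (sqrt (Re (w \<bullet>c w))))"
  define us where "us = map (\<lambda>w. nr w \<cdot>\<^sub>v w) ws"
  define U where "U = mat_of_cols n us"
  have lus: "length us = n" using ws by (simp add: us_def)
  have wsc: "\<And>i. i < n \<Longrightarrow> ws ! i \<in> carrier_vec n" using ws by auto
  have usi: "\<And>i. i < n \<Longrightarrow> us ! i = nr (ws ! i) \<cdot>\<^sub>v ws ! i" using ws by (simp add: us_def)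
  have usc: "\<And>i. i < n \<Longrightarrow> us ! i \<in> carrier_vec n" using usi wsc by simp
  have U: "U \<in> carrier_mat n n" unfolding U_def using lus by (metis mat_of_cols_carrier(1))
  have colU: "\<And>i. i < n \<Longrightarrow> col U i = us ! i" unfolding U_def
    using lus usc by (simp add: col_mat_of_cols)
  have cnr: "\<And>w. cnj (nr w) = nr w" by (simp add: nr_def)
  have ip: "\<And>i j. i < n \<Longrightarrow> j < n \<Longrightarrow> conjugate (us ! i) \<bullet> us ! j = nr (ws ! i) * nr (ws ! j) * (ws ! j \<bullet>c ws ! i)"
  proof -
    fix i j assume i: "i < n" and j: "j < n"
    have "conjugate (us ! i) \<bullet> us ! j = conjugate (nr (ws ! i) \<cdot>\<^sub>v ws ! i) \<bullet> (nr (ws ! j) \<cdot>\<^sub>v ws ! j)"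
      using usi i j by simp
    also have "\<dots> = (nr (ws ! i) \<cdot>\<^sub>v conjugate (ws ! i)) \<bullet> (nr (ws ! j) \<cdot>\<^sub>v ws ! j)"
      by (simp add: conjugate_smult_vec cnr)
    also have "\<dots> = nr (ws ! i) * nr (ws ! j) * (conjugate (ws ! i) \<bullet> ws ! j)"
      using wsc[OF i] wsc[OF j] by (simp add: mult.assoc)
    also have "conjugate (ws ! i) \<bullet> ws ! j = ws ! j \<bullet>c ws ! i"
      using wsc[OF i] wsc[OF j] by (simp add: conjugate_vec_sprod_comm)
    finally show "conjugate (us ! i) \<bullet> us ! j = nr (ws ! i) * nr (ws ! j) * (ws ! j \<bullet>c ws ! i)" .
  qed
  have orth: "\<And>i j. i < n \<Longrightarrow> j < n \<Longrightarrow> (ws ! j \<bullet>c ws ! i = 0) = (j \<noteq> i)"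
    using ws(2) ws(3) by (simp add: corthogonal_def)
  have self: "\<And>i. i < n \<Longrightarrow> nr (ws ! i) * nr (ws ! i) * (ws ! i \<bullet>c ws ! i) = 1"
  proof -
    fix i assume i: "i < n"
    let ?z = "ws ! i \<bullet>c ws ! i"
    have "?z \<noteq> 0" using orth[OF i i] by simp
    moreover have "0 \<le> ?z" by (rule conjugate_square_ge_0_vec)
    ultimately have zr: "?z = complex_of_real (Re ?z)" and zp: "Re ?z > 0"
      using cplx_nonneg_real[of ?z] by (auto simp: less_eq_complex_def complex_eq_iff)
    define R where "R = Re ?z"
    have zR: "?z = complex_of_real R" using zr unfolding R_def .
    have Rp: "R > 0" using zp unfolding R_def .
    have nrR: "nr (ws ! i) = 1 / complex_of_real (sqrt R)" unfolding nr_def R_def ..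
    have "nr (ws ! i) * nr (ws ! i) * ?z = complex_of_real ((1 / sqrt R) * (1 / sqrt R) * R)"
      unfolding zR nrR of_real_mult of_real_divide of_real_1 ..
    also have "(1 / sqrt R) * (1 / sqrt R) * R = 1"
      using Rp by (simp add: field_simps)
    finally show "nr (ws ! i) * nr (ws ! i) * ?z = 1" by simp
  qed
  have UU: "mat_adjoint U * U = 1\<^sub>m n"
  proof (rule eq_matI)
    fix i j assume "i < dim_row (1\<^sub>m n :: complex mat)" "j < dim_col (1\<^sub>m n :: complex mat)"
    hence i: "i < n" and j: "j < n" by simp_all
    have "(mat_adjoint U * U) $$ (i, j) = conjugate (us ! i) \<bullet> us ! j"
      using U i j colU by simp
    also have "\<dots> = (1\<^sub>m n :: complex mat) $$ (i, j)"
      using ip[OF i j] orth[OF i j] self[OF i] i j by auto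
    finally show "(mat_adjoint U * U) $$ (i, j) = (1\<^sub>m n :: complex mat) $$ (i, j)" .
  qed (use U in simp_all)
  have w0: "ws ! 0 = v" using hdws ws(3) n0 by (metis hd_conv_nth list.size(3))
  have "col U 0 = nr v \<cdot>\<^sub>v v"
    using colU[of 0] n0 usi[of 0] unfolding w0 by simp
  thus ?thesis using U UU by blast
qed



lemma unitary_right: fixes U :: "complex mat"
  assumes "U \<in> carrier_mat n n" "mat_adjoint U * U = 1\<^sub>m n" shows "U * mat_adjoint U = 1\<^sub>m n"
  by (rule mat_mult_left_right_inverse[OF adj_carrier[OF assms(1)] assms(1) assms(2)])

lemma spectral:
  fixes A :: "complex mat"
  assumes "A \<in> carrier_mat n n" "mat_adjoint A = A"
  shows "\<exists>U D. U \<in> carrier_mat n n \<and> D \<in> carrier_mat n n \<and> mat_adjoint U * U = 1\<^sub>m n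
     \<and> U * mat_adjoint U = 1\<^sub>m n \<and> diagonal_mat D \<and> mat_adjoint D = D \<and> A = U * D * mat_adjoint U"
  using assms
proof (induction n arbitrary: A)
  case 0
  have d: "dim_row A = 0" using 0 by (simp add: carrier_matD)
  have "A = 1\<^sub>m 0 * A * mat_adjoint (1\<^sub>m 0)"
    unfolding adj_one left_mult_one_mat[OF 0(1)] right_mult_one_mat[OF 0(1)] ..
  moreover have "diagonal_mat A" unfolding diagonal_mat_def d by simp
  ultimately show ?case using 0 one_carrier_mat[of 0] left_mult_one_mat[of "1\<^sub>m 0" 0 0] adj_one[of 0]
    by metis
next
  case (Suc m A)
  define n where "n = Suc m"
  have cA: "A \<in> carrier_mat n n" and hA: "mat_adjoint A = A" using Suc.prems unfolding n_def by auto
  obtain as where cp: "char_poly A = (\<Prod> a \<leftarrow> as. [:- a, 1:])" and las: "length as = n"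
    using char_poly_factorized[OF cA] by blast
  then obtain e es where aes: "as = e # es" unfolding n_def by (cases as) simp_all
  have "eigenvalue A e" unfolding eigenvalue_root_char_poly[OF cA] cp aes by simp
  then obtain v where "eigenvector A v e" unfolding eigenvalue_def by blast
  hence v: "v \<in> carrier_vec n" and v0: "v \<noteq> 0\<^sub>v n" and Av: "A *\<^sub>v v = e \<cdot>\<^sub>v v"
    unfolding eigenvector_def using carrier_matD(1)[OF cA] by auto
  obtain U c where cU: "U \<in> carrier_mat n n" and UU: "mat_adjoint U * U = 1\<^sub>m n"
    and U0: "col U 0 = c \<cdot>\<^sub>v v"
    using orthonormal_completion[OF v v0] by blast
  have UU': "U * mat_adjoint U = 1\<^sub>m n" by (rule unitary_right[OF cU UU])
  have caU: "mat_adjoint U \<in> carrier_mat n n" using cU by (rule adj_carrier)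
  define A' where "A' = mat_adjoint U * (A * U)"
  have cAU: "A * U \<in> carrier_mat n n" using cA cU by (rule mult_carrier_mat)
  have cA': "A' \<in> carrier_mat n n" unfolding A'_def using caU cAU by (rule mult_carrier_mat)
  have hA': "mat_adjoint A' = A'"
    unfolding A'_def adj_mult[OF caU cAU] adj_mult[OF cA cU] adj_adj hA
    using caU cA cU by (rule assoc_mult_mat)
  have n0: "0 < n" unfolding n_def by simp
  note dims = carrier_matD[OF cA] carrier_matD[OF cU] carrier_matD[OF caU] carrier_matD[OF cAU] carrier_matD[OF cA']
  have colAU: "col (A * U) 0 = e \<cdot>\<^sub>v col U 0"
  proof -
    have "col (A * U) 0 = A *\<^sub>v col U 0" using cA cU n0 by (rule col_mult2)
    also have "\<dots> = c \<cdot>\<^sub>v (A *\<^sub>v v)" unfolding U0 using cA v by (rule mult_mat_vec)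
    also have "\<dots> = e \<cdot>\<^sub>v col U 0" unfolding Av U0 smult_smult_assoc by (simp add: mult.commute)
    finally show ?thesis .
  qed
  have col0: "\<And>i. i < n \<Longrightarrow> A' $$ (i, 0) = (if i = 0 then e else 0)"
  proof -
    fix i assume i: "i < n"
    have "A' $$ (i, 0) = row (mat_adjoint U) i \<bullet> col (A * U) 0"
      unfolding A'_def using i n0 by (simp add: dims)
    also have "\<dots> = e * (row (mat_adjoint U) i \<bullet> col U 0)" unfolding colAU
      using i n0 caU cU by (intro scalar_prod_smult_distrib[of _ n]) (simp_all add: dims col_carrier_vec[OF n0 cU])
    also have "row (mat_adjoint U) i \<bullet> col U 0 = (mat_adjoint U * U) $$ (i, 0)"
      using i n0 by (simp add: dims)
    also have "\<dots> = (if i = 0 then 1 else 0)" unfolding UU using i n0 by simp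
    finally show "A' $$ (i, 0) = (if i = 0 then e else 0)" by simp
  qed
  have hidx: "\<And>i j. i < n \<Longrightarrow> j < n \<Longrightarrow> A' $$ (i, j) = cnj (A' $$ (j, i))"
  proof -
    fix i j assume i: "i < n" and j: "j < n"
    have "A' $$ (i, j) = mat_adjoint A' $$ (i, j)" unfolding hA' ..
    also have "\<dots> = cnj (A' $$ (j, i))" using i j by (simp add: dims)
    finally show "A' $$ (i, j) = cnj (A' $$ (j, i))" .
  qed
  have ee: "cnj e = e" using hidx[OF n0 n0] col0[OF n0] by simp
  have row0: "\<And>j. j < n \<Longrightarrow> A' $$ (0, j) = (if j = 0 then e else 0)"
    using hidx[OF n0] col0 ee by simp
  define A3 where "A3 = mat m m (\<lambda>(i,j). A' $$ (Suc i, Suc j))"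
  have cA3: "A3 \<in> carrier_mat m m" unfolding A3_def by simp
  have hA3: "mat_adjoint A3 = A3"
  proof (rule eq_matI)
    fix i j assume "i < dim_row A3" "j < dim_col A3"
    hence i: "i < m" and j: "j < m" unfolding A3_def by simp_all
    have "mat_adjoint A3 $$ (i, j) = cnj (A' $$ (Suc j, Suc i))"
      using i j unfolding A3_def by simp
    also have "\<dots> = mat_adjoint A' $$ (Suc i, Suc j)" using i j cA' unfolding n_def by (simp add: carrier_matD)
    also have "\<dots> = A3 $$ (i, j)" unfolding hA' A3_def using i j by simp
    finally show "mat_adjoint A3 $$ (i, j) = A3 $$ (i, j)" .
  qed (simp_all add: A3_def)
  from Suc.IH[OF cA3 hA3] obtain V D3 where cV: "V \<in> carrier_mat m m" and cD3: "D3 \<in> carrier_mat m m"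
    and VV: "mat_adjoint V * V = 1\<^sub>m m" and VV': "V * mat_adjoint V = 1\<^sub>m m"
    and dD3: "diagonal_mat D3" and hD3: "mat_adjoint D3 = D3" and A3V: "A3 = V * D3 * mat_adjoint V"
    by blast
  define E where "E = mat 1 1 (\<lambda>_. e)"
  have cE: "E \<in> carrier_mat 1 1" unfolding E_def by simp
  define Vb where "Vb = four_block_mat (1\<^sub>m 1) (0\<^sub>m 1 m) (0\<^sub>m m 1) V"
  define D where "D = four_block_mat E (0\<^sub>m 1 m) (0\<^sub>m m 1) D3"
  define W where "W = U * Vb"
  have cVb: "Vb \<in> carrier_mat n n" unfolding Vb_def n_def using cV
    by (metis four_block_carrier_mat one_carrier_mat plus_1_eq_Suc)
  have cD: "D \<in> carrier_mat n n" unfolding D_def n_def using cD3 cE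
    by (metis four_block_carrier_mat plus_1_eq_Suc)
  have caVb: "mat_adjoint Vb \<in> carrier_mat n n" using cVb by (rule adj_carrier)
  have cW: "W \<in> carrier_mat n n" unfolding W_def using cU cVb by (rule mult_carrier_mat)
  have A'blk: "A' = four_block_mat E (0\<^sub>m 1 m) (0\<^sub>m m 1) A3"
  proof (rule eq_matI)
    fix i j assume "i < dim_row (four_block_mat E (0\<^sub>m 1 m) (0\<^sub>m m 1) A3)"
      "j < dim_col (four_block_mat E (0\<^sub>m 1 m) (0\<^sub>m m 1) A3)"
    hence i: "i < Suc m" and j: "j < Suc m" by (simp_all add: E_def A3_def)
    show "A' $$ (i, j) = four_block_mat E (0\<^sub>m 1 m) (0\<^sub>m m 1) A3 $$ (i, j)"
      using i j row0 col0 unfolding n_def by (cases i; cases j) (simp_all add: E_def A3_def)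
  qed (simp_all add: dims E_def A3_def n_def)
  note dims2 = carrier_matD[OF cV] carrier_matD[OF cD3]
  have adjVb: "mat_adjoint Vb = four_block_mat (1\<^sub>m 1) (0\<^sub>m 1 m) (0\<^sub>m m 1) (mat_adjoint V)"
  proof (rule eq_matI)
    fix i j assume "i < dim_row (four_block_mat (1\<^sub>m 1) (0\<^sub>m 1 m) (0\<^sub>m m 1) (mat_adjoint V))"
      "j < dim_col (four_block_mat (1\<^sub>m 1) (0\<^sub>m 1 m) (0\<^sub>m m 1) (mat_adjoint V))"
    hence i: "i < Suc m" and j: "j < Suc m" by (simp_all add: dims2)
    show "mat_adjoint Vb $$ (i, j) = four_block_mat (1\<^sub>m 1) (0\<^sub>m 1 m) (0\<^sub>m m 1) (mat_adjoint V) $$ (i, j)"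
      using i j unfolding Vb_def by (cases i; cases j) (simp_all add: dims2)
  qed (simp_all add: dims2 Vb_def)
  note dimE = carrier_matD[OF cE]
  have cE': "E \<in> carrier_mat (Suc 0) (Suc 0)" using cE by simp
  have caV: "mat_adjoint V \<in> carrier_mat m m" using cV by (rule adj_carrier)
  have cVD3: "V * D3 \<in> carrier_mat m m" using cV cD3 by (rule mult_carrier_mat)
  note dims3 = carrier_matD[OF caV] carrier_matD[OF cVD3]
  have VbD1: "Vb * D = four_block_mat E (0\<^sub>m 1 m) (0\<^sub>m m 1) (V * D3)"
    unfolding Vb_def D_def
    by (subst mult_four_block_mat[OF one_carrier_mat zero_carrier_mat zero_carrier_mat cV cE zero_carrier_mat zero_carrier_mat cD3])
      (simp add: dimE dims2 cE right_add_zero_mat[OF cE'] left_add_zero_mat[OF cVD3])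
  have VbD: "Vb * D * mat_adjoint Vb = A'"
    unfolding VbD1 adjVb A'blk A3V
    by (subst mult_four_block_mat[OF cE zero_carrier_mat zero_carrier_mat cVD3 one_carrier_mat zero_carrier_mat zero_carrier_mat caV])
      (simp add: dimE dims2 dims3 cE right_add_zero_mat[OF cE'] left_add_zero_mat[OF mult_carrier_mat[OF cVD3 caV]])
  have VbVb: "mat_adjoint Vb * Vb = 1\<^sub>m n"
    unfolding adjVb unfolding Vb_def
    by (subst mult_four_block_mat[OF one_carrier_mat zero_carrier_mat zero_carrier_mat caV one_carrier_mat zero_carrier_mat zero_carrier_mat cV])
      (simp add: dims2 dims3 VV n_def)
  have as: "\<And>X Y Z :: complex mat. X \<in> carrier_mat n n \<Longrightarrow> Y \<in> carrier_mat n n \<Longrightarrow> Z \<in> carrier_mat n n \<Longrightarrow> (X * Y) * Z = X * (Y * Z)"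
    by (rule assoc_mult_mat)
  have mc: "\<And>X Y :: complex mat. X \<in> carrier_mat n n \<Longrightarrow> Y \<in> carrier_mat n n \<Longrightarrow> X * Y \<in> carrier_mat n n"
    by (rule mult_carrier_mat)
  have l1: "\<And>X :: complex mat. X \<in> carrier_mat n n \<Longrightarrow> 1\<^sub>m n * X = X" by (rule left_mult_one_mat)
  have r1: "\<And>X :: complex mat. X \<in> carrier_mat n n \<Longrightarrow> X * 1\<^sub>m n = X" by (rule right_mult_one_mat)
  have adjW: "mat_adjoint (U * Vb) = mat_adjoint Vb * mat_adjoint U" by (rule adj_mult[OF cU cVb])
  have WW: "mat_adjoint W * W = 1\<^sub>m n"
  proof -
    have "mat_adjoint W * W = mat_adjoint Vb * ((mat_adjoint U * U) * Vb)"
      unfolding W_def adjW using caVb caU cU cVb by (simp only: as mc)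
    also have "\<dots> = 1\<^sub>m n" unfolding UU l1[OF cVb] VbVb ..
    finally show ?thesis .
  qed
  have UAU: "U * A' * mat_adjoint U = A"
  proof -
    have "U * A' * mat_adjoint U = ((U * mat_adjoint U) * A) * (U * mat_adjoint U)"
      unfolding A'_def using caU cU cA by (simp only: as mc)
    also have "\<dots> = A" unfolding UU' l1[OF cA] r1[OF cA] ..
    finally show ?thesis .
  qed
  have AW: "A = W * D * mat_adjoint W"
  proof -
    have "W * D * mat_adjoint W = U * (Vb * D * mat_adjoint Vb) * mat_adjoint U"
      unfolding W_def adjW using caU cU cA cVb caVb cD by (simp only: as mc)
    also have "\<dots> = A" unfolding VbD UAU ..
    finally show ?thesis by simp
  qed
  have dD: "diagonal_mat D"
    unfolding diagonal_mat_def
  proof (intro allI impI)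
    fix i j assume "i < dim_row D" "j < dim_col D" "i \<noteq> j"
    hence i: "i < Suc m" and j: "j < Suc m" and ij: "i \<noteq> j" by (simp_all add: dims2 D_def E_def)
    show "D $$ (i, j) = 0"
      using i j ij dD3 unfolding D_def diagonal_mat_def by (cases i; cases j) (simp_all add: dims2 E_def)
  qed
  have hD: "mat_adjoint D = D"
  proof (rule eq_matI)
    fix i j assume "i < dim_row D" "j < dim_col D"
    hence i: "i < Suc m" and j: "j < Suc m" by (simp_all add: dims2 D_def E_def)
    have hD3': "\<And>i j. i < m \<Longrightarrow> j < m \<Longrightarrow> cnj (D3 $$ (j, i)) = D3 $$ (i, j)"
    proof -
      fix i j assume "i < m" "j < m"
      hence "mat_adjoint D3 $$ (i, j) = cnj (D3 $$ (j, i))" by (simp add: dims2)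
      thus "cnj (D3 $$ (j, i)) = D3 $$ (i, j)" unfolding hD3 by simp
    qed
    show "mat_adjoint D $$ (i, j) = D $$ (i, j)"
      using i j ee hD3' unfolding D_def by (cases i; cases j) (simp_all add: dims2 E_def)
  qed (simp_all add: dims2 D_def E_def)
  show ?case using cW cD WW unitary_right[OF cW WW] dD hD AW unfolding n_def by blast
qed



lemma quad_entry: fixes X V :: "complex mat"
  assumes cX: "X \<in> carrier_mat n n" and cV: "V \<in> carrier_mat n n" and i: "i < n"
  shows "(mat_adjoint V * X * V) $$ (i, i) = conjugate (col V i) \<bullet> (X *\<^sub>v col V i)"
proof -
  have caV: "mat_adjoint V \<in> carrier_mat n n" using cV by (rule adj_carrier)
  have cXV: "X * V \<in> carrier_mat n n" using cX cV by (rule mult_carrier_mat)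
  have "mat_adjoint V * X * V = mat_adjoint V * (X * V)" using caV cX cV by (rule assoc_mult_mat)
  hence "(mat_adjoint V * X * V) $$ (i, i) = row (mat_adjoint V) i \<bullet> col (X * V) i"
    using i carrier_matD[OF caV] carrier_matD[OF cXV] by simp
  also have "\<dots> = conjugate (col V i) \<bullet> (X *\<^sub>v col V i)"
    using i carrier_matD[OF cV] col_mult2[OF cX cV i] by simp
  finally show ?thesis .
qed

lemma diag_mult_left: fixes X M :: "complex mat"
  assumes cX: "X \<in> carrier_mat n n" and cM: "M \<in> carrier_mat n n" and dM: "diagonal_mat M" and i: "i < n"
  shows "(X * M) $$ (i, i) = X $$ (i, i) * M $$ (i, i)"
proof -
  have "(X * M) $$ (i, i) = (\<Sum>k<n. X $$ (i, k) * M $$ (k, i))"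
    using i carrier_matD[OF cX] carrier_matD[OF cM] by (simp add: scalar_prod_def atLeast0LessThan)
  also have "\<dots> = (\<Sum>k<n. if k = i then X $$ (i, i) * M $$ (i, i) else 0)"
    using dM i carrier_matD[OF cM] unfolding diagonal_mat_def by (intro sum.cong) auto
  also have "\<dots> = X $$ (i, i) * M $$ (i, i)" using i by simp
  finally show ?thesis .
qed

lemma diag_mult_right: fixes X M :: "complex mat"
  assumes cX: "X \<in> carrier_mat n n" and cM: "M \<in> carrier_mat n n" and dM: "diagonal_mat M" and i: "i < n"
  shows "(M * X) $$ (i, i) = M $$ (i, i) * X $$ (i, i)"
proof -
  have "(M * X) $$ (i, i) = (\<Sum>k<n. M $$ (i, k) * X $$ (k, i))"
    using i carrier_matD[OF cX] carrier_matD[OF cM] by (simp add: scalar_prod_def atLeast0LessThan)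
  also have "\<dots> = (\<Sum>k<n. if k = i then M $$ (i, i) * X $$ (i, i) else 0)"
    using dM i carrier_matD[OF cM] unfolding diagonal_mat_def by (intro sum.cong) auto
  also have "\<dots> = M $$ (i, i) * X $$ (i, i)" using i by simp
  finally show ?thesis .
qed

lemma quad_adj: fixes M :: "complex mat"
  assumes cM: "M \<in> carrier_mat n n" and v: "v \<in> carrier_vec n" and x: "x \<in> carrier_vec n"
  shows "conjugate v \<bullet> (M *\<^sub>v x) = conjugate (mat_adjoint M *\<^sub>v v) \<bullet> x"
proof -
  have "conjugate v \<bullet> (M *\<^sub>v x) = (\<Sum>i<n. cnj (v $ i) * (\<Sum>k<n. M $$ (i, k) * x $ k))"
    using cM v x carrier_matD[OF cM] by (simp add: scalar_prod_def atLeast0LessThan carrier_vecD)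
  also have "\<dots> = (\<Sum>k<n. (\<Sum>i<n. cnj (v $ i) * M $$ (i, k)) * x $ k)"
    by (simp add: sum_distrib_left sum_distrib_right mult.assoc mult.left_commute) (rule sum.swap)
  also have "\<dots> = conjugate (mat_adjoint M *\<^sub>v v) \<bullet> x"
    using cM v x carrier_matD[OF cM]
    by (simp add: scalar_prod_def atLeast0LessThan carrier_vecD sum_conjugate mult.commute)
  finally show ?thesis .
qed

lemma psd_sqrt_exists:
  assumes P: "psd_mat n A"
  shows "\<exists>S. psd_mat n S \<and> S * S = A"
proof -
  have cA: "A \<in> carrier_mat n n" and hA: "mat_adjoint A = A"
    and pos: "\<And>v. v \<in> carrier_vec n \<Longrightarrow> 0 \<le> conjugate v \<bullet> (A *\<^sub>v v)"
    using P unfolding psd_mat_def by auto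
  obtain U D where cU: "U \<in> carrier_mat n n" and cD: "D \<in> carrier_mat n n"
    and UU: "mat_adjoint U * U = 1\<^sub>m n" and UU': "U * mat_adjoint U = 1\<^sub>m n"
    and dD: "diagonal_mat D" and AU: "A = U * D * mat_adjoint U"
    using spectral[OF cA hA] by blast
  have caU: "mat_adjoint U \<in> carrier_mat n n" using cU by (rule adj_carrier)
  have as: "\<And>X Y Z :: complex mat. X \<in> carrier_mat n n \<Longrightarrow> Y \<in> carrier_mat n n \<Longrightarrow> Z \<in> carrier_mat n n \<Longrightarrow> (X * Y) * Z = X * (Y * Z)"
    by (rule assoc_mult_mat)
  have mc: "\<And>X Y :: complex mat. X \<in> carrier_mat n n \<Longrightarrow> Y \<in> carrier_mat n n \<Longrightarrow> X * Y \<in> carrier_mat n n"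
    by (rule mult_carrier_mat)
  have l1: "\<And>X :: complex mat. X \<in> carrier_mat n n \<Longrightarrow> 1\<^sub>m n * X = X" by (rule left_mult_one_mat)
  have r1: "\<And>X :: complex mat. X \<in> carrier_mat n n \<Longrightarrow> X * 1\<^sub>m n = X" by (rule right_mult_one_mat)
  have DA: "D = mat_adjoint U * A * U"
  proof -
    have "mat_adjoint U * A * U = (mat_adjoint U * U) * D * (mat_adjoint U * U)"
      unfolding AU using caU cU cD by (simp only: as mc)
    thus ?thesis unfolding UU l1[OF cD] r1[OF cD] by simp
  qed
  have dnn: "\<And>i. i < n \<Longrightarrow> 0 \<le> D $$ (i, i)"
  proof -
    fix i assume i: "i < n"
    have "D $$ (i, i) = conjugate (col U i) \<bullet> (A *\<^sub>v col U i)"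
      unfolding DA by (rule quad_entry[OF cA cU i])
    also have "0 \<le> \<dots>" by (rule pos) (rule col_carrier_vec[OF i cU])
    finally show "0 \<le> D $$ (i, i)" .
  qed
  define r where "r = (\<lambda>i. complex_of_real (sqrt (Re (D $$ (i, i)))))"
  have rr: "\<And>i. i < n \<Longrightarrow> r i * r i = D $$ (i, i)"
  proof -
    fix i assume i: "i < n"
    have "r i * r i = complex_of_real (sqrt (Re (D $$ (i, i))) * sqrt (Re (D $$ (i, i))))"
      unfolding r_def of_real_mult ..
    also have "sqrt (Re (D $$ (i, i))) * sqrt (Re (D $$ (i, i))) = Re (D $$ (i, i))"
      using dnn[OF i] by (simp add: less_eq_complex_def)
    also have "complex_of_real (Re (D $$ (i, i))) = D $$ (i, i)"
      using cplx_nonneg_real[OF dnn[OF i]] by simp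
    finally show "r i * r i = D $$ (i, i)" .
  qed
  have rnn: "\<And>i. i < n \<Longrightarrow> 0 \<le> r i" using dnn by (simp add: r_def less_eq_complex_def)
  have rc: "\<And>i. cnj (r i) = r i" by (simp add: r_def)
  define Ds where "Ds = mat n n (\<lambda>(i, j). if i = j then r i else 0)"
  have cDs: "Ds \<in> carrier_mat n n" unfolding Ds_def by simp
  have DsDs: "Ds * Ds = D"
  proof (rule eq_matI)
    fix i j assume "i < dim_row D" "j < dim_col D"
    hence i: "i < n" and j: "j < n" using carrier_matD[OF cD] by simp_all
    have "(Ds * Ds) $$ (i, j) = (\<Sum>k<n. (if i = k then r i else 0) * (if k = j then r k else 0))"
      using i j unfolding Ds_def by (simp add: scalar_prod_def atLeast0LessThan)
    also have "\<dots> = (\<Sum>k<n. if k = i then (if i = j then r i * r i else 0) else 0)"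
      by (intro sum.cong) auto
    also have "\<dots> = D $$ (i, j)"
      using i j rr dD carrier_matD[OF cD] unfolding diagonal_mat_def by simp
    finally show "(Ds * Ds) $$ (i, j) = D $$ (i, j)" .
  qed (use cD cDs in \<open>simp_all add: carrier_matD\<close>)
  have hDs: "mat_adjoint Ds = Ds"
    by (rule eq_matI) (use rc in \<open>simp_all add: Ds_def\<close>)
  define S where "S = U * Ds * mat_adjoint U"
  have cS: "S \<in> carrier_mat n n" unfolding S_def using cU cDs caU by (simp only: mc)
  have SS: "S * S = A"
  proof -
    have "S * S = U * (Ds * ((mat_adjoint U * U) * (Ds * mat_adjoint U)))"
      unfolding S_def using caU cU cDs by (simp only: as mc)
    also have "\<dots> = U * D * mat_adjoint U"
      unfolding UU l1[OF mc[OF cDs caU]] DsDs[symmetric] using caU cU cDs by (simp only: as mc)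
    finally show ?thesis using AU by simp
  qed
  have hS: "mat_adjoint S = S"
    unfolding S_def adj_mult[OF mc[OF cU cDs] caU] adj_mult[OF cU cDs] adj_adj hDs
    using cU cDs caU by (simp only: as mc)
  have posS: "\<And>v. v \<in> carrier_vec n \<Longrightarrow> 0 \<le> conjugate v \<bullet> (S *\<^sub>v v)"
  proof -
    fix v :: "complex vec" assume v: "v \<in> carrier_vec n"
    define w where "w = mat_adjoint U *\<^sub>v v"
    have w: "w \<in> carrier_vec n" unfolding w_def using caU v by (rule mult_mat_vec_carrier)
    have "S *\<^sub>v v = U *\<^sub>v (Ds *\<^sub>v w)"
      unfolding S_def assoc_mult_mat_vec[OF mc[OF cU cDs] caU v, folded w_def]
        assoc_mult_mat_vec[OF cU cDs w] ..
    hence "conjugate v \<bullet> (S *\<^sub>v v) = conjugate w \<bullet> (Ds *\<^sub>v w)"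
      using quad_adj[OF cU v mult_mat_vec_carrier[OF cDs w]] unfolding w_def by simp
    also have "\<dots> = (\<Sum>i<n. cnj (w $ i) * (\<Sum>k<n. (if i = k then r i else 0) * w $ k))"
      using w unfolding Ds_def by (simp add: scalar_prod_def atLeast0LessThan carrier_vecD)
    also have "\<dots> = (\<Sum>i<n. r i * (w $ i * cnj (w $ i)))"
    proof (rule sum.cong)
      fix i assume "i \<in> {..<n}"
      hence i: "i < n" by simp
      have "(\<Sum>k<n. (if i = k then r i else 0) * w $ k) = (\<Sum>k<n. if i = k then r i * w $ i else 0)"
        by (rule sum.cong) auto
      also have "\<dots> = r i * w $ i" using i by simp
      finally show "cnj (w $ i) * (\<Sum>k<n. (if i = k then r i else 0) * w $ k) = r i * (w $ i * cnj (w $ i))"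
        by simp
    qed simp
    also have "0 \<le> \<dots>"
    proof (rule sum_nonneg)
      fix i assume "i \<in> {..<n}"
      hence "0 \<le> r i" by (simp add: rnn)
      moreover have "0 \<le> w $ i * cnj (w $ i)"
        by (metis conjugate_complex_def conjugate_square_positive)
      ultimately show "0 \<le> r i * (w $ i * cnj (w $ i))" by (rule mult_nonneg_nonneg)
    qed
    finally show "0 \<le> conjugate v \<bullet> (S *\<^sub>v v)" .
  qed
  have "psd_mat n S" unfolding psd_mat_def using cS hS posS by blast
  thus ?thesis using SS by blast
qed



lemma psd_kernel:
  assumes P: "psd_mat n S" and v: "v \<in> carrier_vec n" and z: "conjugate v \<bullet> (S *\<^sub>v v) = 0"
  shows "S *\<^sub>v v = 0\<^sub>v n"
proof -
  obtain R where PR: "psd_mat n R" and RR: "R * R = S" using psd_sqrt_exists[OF P] by blast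
  have cR: "R \<in> carrier_mat n n" and hR: "mat_adjoint R = R" using PR unfolding psd_mat_def by auto
  define x where "x = R *\<^sub>v v"
  have x: "x \<in> carrier_vec n" unfolding x_def using cR v by (rule mult_mat_vec_carrier)
  have Sv: "S *\<^sub>v v = R *\<^sub>v x" unfolding RR[symmetric] x_def using cR cR v by (rule assoc_mult_mat_vec)
  have "conjugate v \<bullet> (S *\<^sub>v v) = conjugate (mat_adjoint R *\<^sub>v v) \<bullet> x"
    unfolding Sv by (rule quad_adj[OF cR v x])
  also have "\<dots> = conjugate x \<bullet> x" unfolding hR x_def ..
  also have "\<dots> = x \<bullet>c x" using x by (simp add: comm_scalar_prod[of _ n])
  finally have "x \<bullet>c x = 0" using z by simp
  hence x0: "x = 0\<^sub>v n" using x by simp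
  show ?thesis unfolding Sv x0 using cR by (intro eq_vecI) (simp_all add: carrier_matD scalar_prod_def)
qed

lemma psd_sqrt_unique:
  assumes PS: "psd_mat n S" and PT: "psd_mat n T" and ST: "S * S = T * T"
  shows "S = T"
proof -
  have cS: "S \<in> carrier_mat n n" and hS: "mat_adjoint S = S"
    and posS: "\<And>v. v \<in> carrier_vec n \<Longrightarrow> 0 \<le> conjugate v \<bullet> (S *\<^sub>v v)"
    using PS unfolding psd_mat_def by auto
  have cT: "T \<in> carrier_mat n n" and hT: "mat_adjoint T = T"
    and posT: "\<And>v. v \<in> carrier_vec n \<Longrightarrow> 0 \<le> conjugate v \<bullet> (T *\<^sub>v v)"
    using PT unfolding psd_mat_def by auto
  define Dl where "Dl = S - T"
  have cDl: "Dl \<in> carrier_mat n n" unfolding Dl_def using cT by (rule minus_carrier_mat)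
  have hDl: "mat_adjoint Dl = Dl" unfolding Dl_def adj_minus[OF cS cT] hS hT ..
  obtain V M where cV: "V \<in> carrier_mat n n" and cM: "M \<in> carrier_mat n n"
    and VV: "mat_adjoint V * V = 1\<^sub>m n" and VV': "V * mat_adjoint V = 1\<^sub>m n"
    and dM: "diagonal_mat M" and DV: "Dl = V * M * mat_adjoint V"
    using spectral[OF cDl hDl] by blast
  have caV: "mat_adjoint V \<in> carrier_mat n n" using cV by (rule adj_carrier)
  have as: "\<And>X Y Z :: complex mat. X \<in> carrier_mat n n \<Longrightarrow> Y \<in> carrier_mat n n \<Longrightarrow> Z \<in> carrier_mat n n \<Longrightarrow> (X * Y) * Z = X * (Y * Z)"
    by (rule assoc_mult_mat)
  have mc: "\<And>X Y :: complex mat. X \<in> carrier_mat n n \<Longrightarrow> Y \<in> carrier_mat n n \<Longrightarrow> X * Y \<in> carrier_mat n n"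
    by (rule mult_carrier_mat)
  have ac: "\<And>X Y :: complex mat. X \<in> carrier_mat n n \<Longrightarrow> Y \<in> carrier_mat n n \<Longrightarrow> X + Y \<in> carrier_mat n n"
    by (rule add_carrier_mat)
  have d1: "\<And>X Y Z :: complex mat. X \<in> carrier_mat n n \<Longrightarrow> Y \<in> carrier_mat n n \<Longrightarrow> Z \<in> carrier_mat n n \<Longrightarrow> (X + Y) * Z = X * Z + Y * Z"
    by (rule add_mult_distrib_mat)
  have d2: "\<And>X Y Z :: complex mat. X \<in> carrier_mat n n \<Longrightarrow> Y \<in> carrier_mat n n \<Longrightarrow> Z \<in> carrier_mat n n \<Longrightarrow> X * (Y + Z) = X * Y + X * Z"
    by (rule mult_add_distrib_mat)
  have l1: "\<And>X :: complex mat. X \<in> carrier_mat n n \<Longrightarrow> 1\<^sub>m n * X = X" by (rule left_mult_one_mat)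
  have r1: "\<And>X :: complex mat. X \<in> carrier_mat n n \<Longrightarrow> X * 1\<^sub>m n = X" by (rule right_mult_one_mat)
  have vv: "\<And>X :: complex mat. X \<in> carrier_mat n n \<Longrightarrow> V * (mat_adjoint V * X) = X"
  proof -
    fix X :: "complex mat" assume X: "X \<in> carrier_mat n n"
    have "V * (mat_adjoint V * X) = (V * mat_adjoint V) * X" using cV caV X by (simp only: as)
    thus "V * (mat_adjoint V * X) = X" unfolding VV' l1[OF X] .
  qed
  have MD: "M = mat_adjoint V * Dl * V"
  proof -
    have "mat_adjoint V * Dl * V = (mat_adjoint V * V) * M * (mat_adjoint V * V)"
      unfolding DV using caV cV cM by (simp only: as mc)
    thus ?thesis unfolding VV l1[OF cM] r1[OF cM] by simp
  qed
  define S' where "S' = mat_adjoint V * S * V"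
  define T' where "T' = mat_adjoint V * T * V"
  have cS': "S' \<in> carrier_mat n n" unfolding S'_def using caV cS cV by (simp only: mc)
  have cT': "T' \<in> carrier_mat n n" unfolding T'_def using caV cT cV by (simp only: mc)
  have SDT: "S * Dl + Dl * T = 0\<^sub>m n n"
    unfolding Dl_def mult_minus_distrib_mat[OF cS cS cT] minus_mult_distrib_mat[OF cS cT cT] ST
  proof (rule eq_matI)
    fix i j assume "i < dim_row (0\<^sub>m n n :: complex mat)" "j < dim_col (0\<^sub>m n n :: complex mat)"
    hence i: "i < n" and j: "j < n" by simp_all
    show "(T * T - S * T + (S * T - T * T)) $$ (i, j) = (0\<^sub>m n n :: complex mat) $$ (i, j)"
      using i j carrier_matD[OF cT] carrier_matD[OF cS] by simp
  qed (use carrier_matD[OF cS] carrier_matD[OF cT] in simp_all)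
  have key: "S' * M + M * T' = 0\<^sub>m n n"
  proof -
    have "S' * M + M * T' = mat_adjoint V * ((S * Dl + Dl * T) * V)"
      unfolding S'_def T'_def MD using caV cV cS cT cDl by (simp only: as mc ac d1 d2 vv)
    also have "\<dots> = 0\<^sub>m n n" unfolding SDT using caV cV
      by (metis left_mult_zero_mat right_mult_zero_mat)
    finally show ?thesis .
  qed
  have Mii: "\<And>i. i < n \<Longrightarrow> M $$ (i, i) = 0"
  proof (rule ccontr)
    fix i assume i: "i < n" and ne: "M $$ (i, i) \<noteq> 0"
    define x where "x = col V i"
    have x: "x \<in> carrier_vec n" unfolding x_def by (rule col_carrier_vec[OF i cV])
    have qS: "S' $$ (i, i) = conjugate x \<bullet> (S *\<^sub>v x)" unfolding S'_def x_def by (rule quad_entry[OF cS cV i])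
    have qT: "T' $$ (i, i) = conjugate x \<bullet> (T *\<^sub>v x)" unfolding T'_def x_def by (rule quad_entry[OF cT cV i])
    have qD: "M $$ (i, i) = conjugate x \<bullet> (Dl *\<^sub>v x)" unfolding MD x_def by (rule quad_entry[OF cDl cV i])
    have "(S' * M + M * T') $$ (i, i) = 0" unfolding key using i by simp
    moreover have "(S' * M + M * T') $$ (i, i) = (S' * M) $$ (i, i) + (M * T') $$ (i, i)"
      by (rule index_add_mat(1)) (use i carrier_matD[OF cT'] carrier_matD[OF cM] in simp_all)
    ultimately have "S' $$ (i, i) * M $$ (i, i) + M $$ (i, i) * T' $$ (i, i) = 0"
      unfolding diag_mult_left[OF cS' cM dM i] diag_mult_right[OF cT' cM dM i] by simp
    hence "M $$ (i, i) * (S' $$ (i, i) + T' $$ (i, i)) = 0" by (simp add: algebra_simps)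
    hence sum0: "S' $$ (i, i) + T' $$ (i, i) = 0" using ne by simp
    have "0 \<le> S' $$ (i, i)" unfolding qS by (rule posS[OF x])
    moreover have "0 \<le> T' $$ (i, i)" unfolding qT by (rule posT[OF x])
    ultimately have "S' $$ (i, i) = 0" "T' $$ (i, i) = 0" using sum0 by (simp_all add: add_nonneg_eq_0_iff)
    hence "S *\<^sub>v x = 0\<^sub>v n" "T *\<^sub>v x = 0\<^sub>v n" using psd_kernel[OF PS x] psd_kernel[OF PT x] qS qT by simp_all
    hence "Dl *\<^sub>v x = 0\<^sub>v n" unfolding Dl_def using cS cT x by (simp add: minus_mult_distrib_mat_vec)
    hence "M $$ (i, i) = 0" unfolding qD using x by simp
    with ne show False by contradiction
  qed
  have M0: "M = 0\<^sub>m n n"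
    by (rule eq_matI) (use Mii dM carrier_matD[OF cM] in \<open>auto simp: diagonal_mat_def\<close>)
  have "Dl = 0\<^sub>m n n" unfolding DV M0 using cV caV
    by (metis left_mult_zero_mat right_mult_zero_mat)
  hence DD: "S - T = 0\<^sub>m n n" unfolding Dl_def .
  show ?thesis
  proof (rule eq_matI)
    fix i j assume "i < dim_row T" "j < dim_col T"
    hence i: "i < n" and j: "j < n" using carrier_matD[OF cT] by simp_all
    have "(S - T) $$ (i, j) = 0" unfolding DD using i j by simp
    thus "S $$ (i, j) = T $$ (i, j)" using i j carrier_matD[OF cT] by simp
  qed (use carrier_matD[OF cS] carrier_matD[OF cT] in simp_all)
qed



theorem mainTheorem13:
  fixes A B :: "complex mat" and n :: nat
  assumes "psd_mat n A" and "psd_mat n B"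
  shows "trace ((A + B) ^\<^sub>m 4) - trace (A ^\<^sub>m 4 + B ^\<^sub>m 4)
           \<ge> (2 ^ 4 - 2) * trace ((mat_sqrt A * B * mat_sqrt A) ^\<^sub>m 2)
       \<and> (2 ^ 4 - 2) * trace ((mat_sqrt A * B * mat_sqrt A) ^\<^sub>m 2)
           = 14 * trace ((A * B) ^\<^sub>m 2)"
proof -
  have cA: "A \<in> carrier_mat n n" and cB: "B \<in> carrier_mat n n"
    using assms unfolding psd_mat_def by auto
  have dA: "dim_row A = n" using cA by (rule carrier_matD)
  have ex1: "\<exists>!S. psd_mat (dim_row A) S \<and> S * S = A"
    unfolding dA using psd_sqrt_exists[OF assms(1)] psd_sqrt_unique by blast
  have PA: "psd_mat n (mat_sqrt A)" and PP: "mat_sqrt A * mat_sqrt A = A"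
    using theI'[OF ex1] unfolding mat_sqrt_def dA by auto
  obtain Q where PQ: "psd_mat n Q" and QQ: "Q * Q = B" using psd_sqrt_exists[OF assms(2)] by blast
  define P where "P = mat_sqrt A"
  have cP: "P \<in> carrier_mat n n" and hP: "mat_adjoint P = P" using PA unfolding P_def psd_mat_def by auto
  have cQ: "Q \<in> carrier_mat n n" and hQ: "mat_adjoint Q = Q" using PQ unfolding psd_mat_def by auto
  have PP': "P * P = A" using PP unfolding P_def .
  note id = main_identity[OF cA cB cP cQ hP hQ PP' QQ]
  have as: "\<And>X Y Z :: complex mat. X \<in> carrier_mat n n \<Longrightarrow> Y \<in> carrier_mat n n \<Longrightarrow> Z \<in> carrier_mat n n \<Longrightarrow> (X * Y) * Z = X * (Y * Z)"
    by (rule assoc_mult_mat)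
  have mc: "\<And>X Y :: complex mat. X \<in> carrier_mat n n \<Longrightarrow> Y \<in> carrier_mat n n \<Longrightarrow> X * Y \<in> carrier_mat n n"
    by (rule mult_carrier_mat)
  have tr: "trace ((P * B * P) ^\<^sub>m 2) = trace ((A * B) ^\<^sub>m 2)"
  proof -
    have cPBP: "P * B * P \<in> carrier_mat n n" using cP cB by (simp only: mc)
    have "trace ((P * B * P) ^\<^sub>m 2) = trace (P * (B * (P * (P * (B * P)))))"
      unfolding pow2[OF cPBP] using cP cB by (simp only: as mc)
    also have "\<dots> = trace ((B * (P * (P * (B * P)))) * P)"
      using cP cB by (intro trace_comm[of _ n n]) (simp_all only: mc)
    also have "\<dots> = trace (B * ((P * P) * (B * (P * P))))"
      using cP cB by (simp only: as mc)
    also have "\<dots> = trace (B * (A * (B * A)))" unfolding PP' ..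
    also have "\<dots> = trace (A * (B * (A * B)))"
      using rot[OF cA cB cA cB] by simp
    also have "\<dots> = trace ((A * B) ^\<^sub>m 2)"
      unfolding pow2[OF mc[OF cA cB]] using cA cB by (simp only: as mc)
    finally show ?thesis .
  qed
  have c14: "(2 ^ 4 - 2 :: complex) = 14" by simp
  have nn: "0 \<le> 4 * trace ((P * (A - B) * Q) * mat_adjoint (P * (A - B) * Q))
      + 6 * trace ((A * B - B * A) * mat_adjoint (A * B - B * A))"
    by (intro add_nonneg_nonneg mult_nonneg_nonneg trace_adj_nonneg) (simp_all add: less_eq_complex_def)
  have "14 * trace ((A * B) ^\<^sub>m 2) \<le> trace ((A + B) ^\<^sub>m 4) - trace (A ^\<^sub>m 4 + B ^\<^sub>m 4)"
    using nn unfolding id[symmetric] by simp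
  thus ?thesis unfolding c14 P_def[symmetric] tr by simp
qed

end
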